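(* Let $\mathbb{X}$ be a smooth real Banach space and $\mathbb{Y}$ a strictly convex and smooth real Banach space. Let $T\in\mathbb{L}(\mathbb{X},\mathbb{Y})$ with $\operatorname{rank}T=1$ and $\|T\|=1$. If $(x,Tx)$ is not a weak CPP for some $x\in M_T$, then $T$ is an extreme contraction.
   Context: All Banach spaces are real and of dimension greater than $1$. $M_T=\{x\in S_{\mathbb{X}}:\|Tx\|=\|T\|\}$. A norm one $T\in\mathbb{L}(\mathbb{X},\mathbb{Y})$ is an extreme contraction if it is an extreme point of the closed unit ball of $\mathbb{L}(\mathbb{X},\mathbb{Y})$. $B(x,r)=\{u:\|u-x\|<r\}$. $x\perp_B y$ means $\|x+\lambda y\|\ge\|x\|$ for all real $\lambda$; $x^\perp=\{y:x\perp_By\}$. For $x\in S_{\mathbb{X}}$, $y\in S_{\mathbb{Y}}$, $(x,y)$ is a weak CPP if there exist $z\in x^\perp\cap S_{\mathbb{X}}$, $w\in y^\perp\cap S_{\mathbb{Y}}$, $r>0$, $\mu>0$ such that for all $a,b\in\mathbb{R}$, $ax+bz\in B(x,r)\cap S_{\mathbb{X}}$ implies $\|ay+b\mu w\|\le1$. *)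

theory Defs
  imports "HOL-Analysis.Analysis"
begin

definition dim_gt_one :: "'a::real_normed_vector itself \<Rightarrow> bool" where
  "dim_gt_one _ \<longleftrightarrow> (\<exists>u v::'a. independent {u, v} \<and> u \<noteq> v)"

definition smooth_space :: "'a::real_normed_vector itself \<Rightarrow> bool" where
  "smooth_space _ \<longleftrightarrow>
     (\<forall>x::'a. norm x = 1 \<longrightarrow> (\<exists>!f::'a \<Rightarrow>\<^sub>L real. norm f = 1 \<and> blinfun_apply f x = 1))"

definition strictly_convex_space :: "'a::real_normed_vector itself \<Rightarrow> bool" where
  "strictly_convex_space _ \<longleftrightarrow>
     (\<forall>x y::'a. norm x = 1 \<longrightarrow> norm y = 1 \<longrightarrow> x \<noteq> y \<longrightarrow> norm ((1/2) *\<^sub>R (x + y)) < 1)"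

definition bj_orth :: "'a::real_normed_vector \<Rightarrow> 'a \<Rightarrow> bool" where
  "bj_orth x y \<longleftrightarrow> (\<forall>t::real. norm (x + t *\<^sub>R y) \<ge> norm x)"

definition norm_attainment_set :: "('a::real_normed_vector \<Rightarrow>\<^sub>L 'b::real_normed_vector) \<Rightarrow> 'a set" where
  "norm_attainment_set T = {x. norm x = 1 \<and> norm (blinfun_apply T x) = norm T}"

definition weak_CPP :: "'a::real_normed_vector \<Rightarrow> 'b::real_normed_vector \<Rightarrow> bool" where
  "weak_CPP x y \<longleftrightarrow> norm x = 1 \<and> norm y = 1 \<and>
     (\<exists>z w r \<mu>. bj_orth x z \<and> norm z = 1 \<and> bj_orth y w \<and> norm w = 1 \<and>
        r > (0::real) \<and> \<mu> > (0::real) \<and>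
        (\<forall>a b::real. (a *\<^sub>R x + b *\<^sub>R z \<in> ball x r \<and> norm (a *\<^sub>R x + b *\<^sub>R z) = 1)
            \<longrightarrow> norm (a *\<^sub>R y + (b * \<mu>) *\<^sub>R w) \<le> 1))"

end

theory Submission
  imports Defs
begin

lemma func_le:
  fixes g :: "'b::real_normed_vector \<Rightarrow>\<^sub>L real"
  assumes "norm g \<le> 1"
  shows "blinfun_apply g v \<le> norm v"
proof -
  have "norm (blinfun_apply g v) \<le> norm g * norm v" by (rule norm_blinfun)
  also have "\<dots> \<le> norm v" using assms by (simp add: mult_left_le_one_le)
  finally show ?thesis by simp
qed

lemma op_le:
  fixes A :: "'a::real_normed_vector \<Rightarrow>\<^sub>L 'b::real_normed_vector"
  assumes "norm A \<le> 1"
  shows "norm (blinfun_apply A v) \<le> norm v"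
proof -
  have "norm (blinfun_apply A v) \<le> norm A * norm v" by (rule norm_blinfun)
  also have "\<dots> \<le> norm v" using assms by (simp add: mult_left_le_one_le)
  finally show ?thesis .
qed

lemma key_wcpp:
  fixes A :: "'a::real_normed_vector \<Rightarrow>\<^sub>L 'b::real_normed_vector"
    and g :: "'b \<Rightarrow>\<^sub>L real"
  assumes nx: "norm x = 1" and ny: "norm (blinfun_apply A x) = 1"
    and nA: "norm A \<le> 1" and ng: "norm g \<le> 1"
    and gy: "blinfun_apply g (blinfun_apply A x) = 1"
    and gz: "blinfun_apply g (blinfun_apply A z0) = 0"
    and Az: "blinfun_apply A z0 \<noteq> 0"
  shows "weak_CPP x (blinfun_apply A x)"
proof -
  define y where "y = blinfun_apply A x"
  have z0: "z0 \<noteq> 0" using Az by auto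
  define z where "z = (1 / norm z0) *\<^sub>R z0"
  have nz: "norm z = 1" using z0 by (simp add: z_def)
  define s where "s = blinfun_apply A z"
  have s_eq: "s = (1 / norm z0) *\<^sub>R blinfun_apply A z0"
    by (simp add: s_def z_def blinfun.scaleR_right)
  have s0: "s \<noteq> 0" using Az z0 s_eq by simp
  have gs: "blinfun_apply g s = 0" using gz s_eq by (simp add: blinfun.scaleR_right)
  define w where "w = (1 / norm s) *\<^sub>R s"
  have nw: "norm w = 1" using s0 by (simp add: w_def)
  have gw: "blinfun_apply g w = 0" using gs by (simp add: w_def blinfun.scaleR_right)
  have o1: "bj_orth x z"
    unfolding bj_orth_def
  proof
    fix t :: real
    have "blinfun_apply g (blinfun_apply A (x + t *\<^sub>R z)) = 1"
      using gy gz by (simp add: z_def blinfun.add_right blinfun.scaleR_right)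
    moreover have "blinfun_apply g (blinfun_apply A (x + t *\<^sub>R z)) \<le> norm (blinfun_apply A (x + t *\<^sub>R z))"
      by (rule func_le[OF ng])
    moreover have "norm (blinfun_apply A (x + t *\<^sub>R z)) \<le> norm (x + t *\<^sub>R z)"
      by (rule op_le[OF nA])
    ultimately show "norm (x + t *\<^sub>R z) \<ge> norm x" using nx by linarith
  qed
  have o2: "bj_orth y w"
    unfolding bj_orth_def
  proof
    fix t :: real
    have "blinfun_apply g (y + t *\<^sub>R w) = 1"
      using gy gw by (simp add: y_def blinfun.add_right blinfun.scaleR_right)
    moreover have "blinfun_apply g (y + t *\<^sub>R w) \<le> norm (y + t *\<^sub>R w)"
      by (rule func_le[OF ng])
    moreover have "norm y = 1" using ny y_def by simp
    ultimately show "norm (y + t *\<^sub>R w) \<ge> norm y" by linarith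
  qed
  have cond: "\<forall>a b::real. (a *\<^sub>R x + b *\<^sub>R z \<in> ball x 1 \<and> norm (a *\<^sub>R x + b *\<^sub>R z) = 1)
            \<longrightarrow> norm (a *\<^sub>R y + (b * norm s) *\<^sub>R w) \<le> 1"
  proof (intro allI impI)
    fix a b :: real
    assume h: "a *\<^sub>R x + b *\<^sub>R z \<in> ball x 1 \<and> norm (a *\<^sub>R x + b *\<^sub>R z) = 1"
    have "a *\<^sub>R y + (b * norm s) *\<^sub>R w = blinfun_apply A (a *\<^sub>R x + b *\<^sub>R z)"
      using s0 by (simp add: y_def w_def s_def blinfun.add_right blinfun.scaleR_right)
    also have "norm \<dots> \<le> norm (a *\<^sub>R x + b *\<^sub>R z)" by (rule op_le[OF nA])
    finally show "norm (a *\<^sub>R y + (b * norm s) *\<^sub>R w) \<le> 1" using h by simp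
  qed
  show ?thesis
    unfolding weak_CPP_def
    using nx ny o1 o2 nz nw s0 cond y_def
    by (intro conjI exI[of _ z] exI[of _ w] exI[of _ 1] exI[of _ "norm s"]) auto
qed


lemma conv_norm:
  fixes A B :: "'c::real_normed_vector"
  assumes "norm A \<le> 1" "norm B \<le> 1" "0 \<le> v" "v \<le> 1"
  shows "norm ((1 - v) *\<^sub>R A + v *\<^sub>R B) \<le> 1"
proof -
  have "norm ((1 - v) *\<^sub>R A + v *\<^sub>R B) \<le> norm ((1 - v) *\<^sub>R A) + norm (v *\<^sub>R B)"
    by (rule norm_triangle_ineq)
  also have "\<dots> = (1 - v) * norm A + v * norm B" using assms by simp
  also have "\<dots> \<le> (1 - v) * 1 + v * 1"
    using assms by (intro add_mono mult_left_mono) auto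
  finally show ?thesis by simp
qed

lemma func_norm1:
  fixes G :: "'a::real_normed_vector \<Rightarrow>\<^sub>L real"
  assumes "norm G \<le> 1" "norm x = 1" "blinfun_apply G x = 1"
  shows "norm G = 1"
proof -
  have "norm (blinfun_apply G x) \<le> norm G * norm x" by (rule norm_blinfun)
  then show ?thesis using assms by simp
qed

lemma comb_sum:
  fixes A B :: "'c::real_vector"
  shows "((1 - (u + e)) *\<^sub>R A + (u + e) *\<^sub>R B) + ((1 - (u - e)) *\<^sub>R A + (u - e) *\<^sub>R B) = 2 *\<^sub>R ((1 - u) *\<^sub>R A + u *\<^sub>R B)"
  apply (simp add: scaleR_diff_left scaleR_add_left scaleR_add_right scaleR_diff_right algebra_simps)
  apply (simp add: scaleR_2 scaleR_add_right flip: scaleR_scaleR)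
  done

lemma comb_diff:
  fixes A B :: "'c::real_vector"
  shows "((1 - (u + e)) *\<^sub>R A + (u + e) *\<^sub>R B) - ((1 - (u - e)) *\<^sub>R A + (u - e) *\<^sub>R B) = (2*e) *\<^sub>R (B - A)"
  apply (simp add: scaleR_diff_left scaleR_add_left scaleR_add_right scaleR_diff_right algebra_simps)
  apply (simp add: scaleR_2 scaleR_add_right flip: scaleR_scaleR)
  done

theorem mainTheorem4:
  fixes T :: "'a::banach \<Rightarrow>\<^sub>L 'b::banach" and x :: 'a
  assumes "dim_gt_one TYPE('a)" and "dim_gt_one TYPE('b)"
    and "smooth_space TYPE('a)"
    and "strictly_convex_space TYPE('b)" and "smooth_space TYPE('b)"
    and "dim (range (blinfun_apply T)) = 1"
    and "norm T = 1"
    and "x \<in> norm_attainment_set T"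
    and "\<not> weak_CPP x (blinfun_apply T x)"
  shows "T extreme_point_of cball 0 1"
proof (rule ccontr)
  assume ne: "\<not> T extreme_point_of cball 0 1"
  define y where "y = blinfun_apply T x"
  have nx: "norm x = 1" and ny: "norm y = 1"
    using assms(7,8) by (auto simp: norm_attainment_set_def y_def)
  obtain g :: "'b \<Rightarrow>\<^sub>L real" where ng: "norm g = 1" and gy: "blinfun_apply g y = 1"
    using assms(5) ny unfolding smooth_space_def by blast
  have "T \<in> cball 0 1" using assms(7) by simp
  with ne obtain A B where A: "A \<in> cball 0 1" and B: "B \<in> cball 0 1"
    and seg: "T \<in> open_segment A B"
    unfolding extreme_point_of_def by blast
  from seg obtain u where AB: "A \<noteq> B" and u: "0 < u" "u < 1"
    and Tu: "T = (1 - u) *\<^sub>R A + u *\<^sub>R B"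
    unfolding in_segment by blast
  have nA: "norm A \<le> 1" and nB: "norm B \<le> 1" using A B by auto
  define e where "e = min u (1 - u)"
  have e: "0 < e" "e \<le> u" "e \<le> 1 - u" using u by (auto simp: e_def)
  define A1 where "A1 = (1 - (u + e)) *\<^sub>R A + (u + e) *\<^sub>R B"
  define B1 where "B1 = (1 - (u - e)) *\<^sub>R A + (u - e) *\<^sub>R B"
  have nA1: "norm A1 \<le> 1" unfolding A1_def using e nA nB by (intro conv_norm) auto
  have nB1: "norm B1 \<le> 1" unfolding B1_def using e nA nB by (intro conv_norm) auto
  have sum: "A1 + B1 = 2 *\<^sub>R T"
    unfolding A1_def B1_def Tu by (rule comb_sum)
  have diff: "A1 - B1 = (2 * e) *\<^sub>R (B - A)"
    unfolding A1_def B1_def by (rule comb_diff)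
  have sumx: "blinfun_apply A1 x + blinfun_apply B1 x = 2 *\<^sub>R y"
    using arg_cong[OF sum, of "\<lambda>F. blinfun_apply F x"]
    by (simp add: y_def blinfun.add_left blinfun.scaleR_left)
  have gsum: "blinfun_apply g (blinfun_apply A1 x) + blinfun_apply g (blinfun_apply B1 x) = 2"
    using arg_cong[OF sumx, of "blinfun_apply g"] gy
    by (simp add: blinfun.add_right blinfun.scaleR_right)
  have ga: "blinfun_apply g (blinfun_apply A1 x) \<le> norm (blinfun_apply A1 x)"
    by (rule func_le) (simp add: ng)
  have gb: "blinfun_apply g (blinfun_apply B1 x) \<le> norm (blinfun_apply B1 x)"
    by (rule func_le) (simp add: ng)
  have na: "norm (blinfun_apply A1 x) \<le> 1" using op_le[OF nA1, of x] nx by simp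
  have nb: "norm (blinfun_apply B1 x) \<le> 1" using op_le[OF nB1, of x] nx by simp
  have ga1: "blinfun_apply g (blinfun_apply A1 x) = 1" using gsum ga gb na nb by linarith
  have gb1: "blinfun_apply g (blinfun_apply B1 x) = 1" using gsum ga gb na nb by linarith
  have na1: "norm (blinfun_apply A1 x) = 1" using ga1 ga na by linarith
  have nb1: "norm (blinfun_apply B1 x) = 1" using gb1 gb nb by linarith
  have A1x: "blinfun_apply A1 x = y"
  proof (rule ccontr)
    assume "blinfun_apply A1 x \<noteq> y"
    moreover have "blinfun_apply A1 x = blinfun_apply B1 x \<Longrightarrow> blinfun_apply A1 x = y"
    proof -
      assume eq: "blinfun_apply A1 x = blinfun_apply B1 x"
      have "2 *\<^sub>R blinfun_apply A1 x = 2 *\<^sub>R y" using sumx eq by (simp add: scaleR_2)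
      then show "blinfun_apply A1 x = y" by simp
    qed
    ultimately have "blinfun_apply A1 x \<noteq> blinfun_apply B1 x" by blast
    then have "norm ((1/2) *\<^sub>R (blinfun_apply A1 x + blinfun_apply B1 x)) < 1"
      using assms(4) na1 nb1 unfolding strictly_convex_space_def by blast
    then show False using sumx ny by simp
  qed
  have B1x: "blinfun_apply B1 x = y" using sumx A1x by (simp add: scaleR_2)
  have nG1: "norm (g o\<^sub>L A1) \<le> 1"
    using norm_blinfun_compose[of g A1] ng nA1 by (simp add: order_trans)
  have nG2: "norm (g o\<^sub>L B1) \<le> 1"
    using norm_blinfun_compose[of g B1] ng nB1 by (simp add: order_trans)
  have G1x: "blinfun_apply (g o\<^sub>L A1) x = 1" using ga1 by simp
  have G2x: "blinfun_apply (g o\<^sub>L B1) x = 1" using gb1 by simp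
  have GG: "g o\<^sub>L A1 = g o\<^sub>L B1"
    using assms(3) nx func_norm1[OF nG1 nx G1x] func_norm1[OF nG2 nx G2x] G1x G2x
    unfolding smooth_space_def by blast
  have GGa: "blinfun_apply g (blinfun_apply A1 v) = blinfun_apply g (blinfun_apply B1 v)" for v
    using arg_cong[OF GG, of "\<lambda>F. blinfun_apply F v"] by simp
  show False
  proof (cases "\<exists>z0. blinfun_apply g (blinfun_apply A1 z0) = 0 \<and>
                    (blinfun_apply A1 z0 \<noteq> 0 \<or> blinfun_apply B1 z0 \<noteq> 0)")
    case True
    then obtain z0 where gz: "blinfun_apply g (blinfun_apply A1 z0) = 0"
      and nz: "blinfun_apply A1 z0 \<noteq> 0 \<or> blinfun_apply B1 z0 \<noteq> 0" by blast
    have "weak_CPP x y"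
    proof (cases "blinfun_apply A1 z0 \<noteq> 0")
      case True
      from key_wcpp[of x A1 g z0, OF nx _ nA1 _ _ gz True] A1x ny ng gy
      show ?thesis by simp
    next
      case False
      with nz have nz': "blinfun_apply B1 z0 \<noteq> 0" by simp
      have gz': "blinfun_apply g (blinfun_apply B1 z0) = 0" using gz GGa by simp
      from key_wcpp[of x B1 g z0, OF nx _ nB1 _ _ gz' nz'] B1x ny ng gy
      show ?thesis by simp
    qed
    then show False using assms(9) y_def by simp
  next
    case False
    have "A1 = B1"
    proof (rule blinfun_eqI)
      fix v
      define F where "F = blinfun_apply g (blinfun_apply A1 v)"
      define z0 where "z0 = v - F *\<^sub>R x"
      have "blinfun_apply g (blinfun_apply A1 z0) = 0"
        using ga1 by (simp add: z0_def F_def blinfun.diff_right blinfun.scaleR_right)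
      with False have "blinfun_apply A1 z0 = 0" "blinfun_apply B1 z0 = 0" by auto
      then have "blinfun_apply A1 v = F *\<^sub>R y" "blinfun_apply B1 v = F *\<^sub>R y"
        using A1x B1x by (simp_all add: z0_def blinfun.diff_right blinfun.scaleR_right)
      then show "blinfun_apply A1 v = blinfun_apply B1 v" by simp
    qed
    then have "(2 * e) *\<^sub>R (B - A) = 0" using diff by simp
    then show False using e AB by simp
  qed
qed

end
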